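(* Let $\mathbb{T}$ be a time scale with $0\in\mathbb{T}_\kappa^\kappa$, let $\alpha\in]0,1]$, and let $f:\mathbb{T}\to\mathbb{R}$, $f(t)=|t|$. Then $$f^{\diamondsuit^\alpha}(0)=\begin{cases}0&\text{if }0\text{ is dense},\\ \dfrac{\sigma(0)+\rho(0)}{[\sigma(0)-\rho(0)]^\alpha}&\text{otherwise}.\end{cases}$$
   Context: A time scale $\mathbb{T}$ is a nonempty closed subset of $\mathbb{R}$. $\sigma(t)=\inf\{s\in\mathbb{T}:s>t\}$ ($\inf\emptyset=\sup\mathbb{T}$), $\rho(t)=\sup\{s\in\mathbb{T}:s<t\}$ ($\sup\emptyset=\inf\mathbb{T}$); $f^\sigma=f\circ\sigma$, $f^\rho=f\circ\rho$. A point $t$ is dense if $\sigma(t)=t=\rho(t)$. $\mathbb{T}^\kappa=\mathbb{T}\setminus\{\sup\mathbb{T}\}$ if $\sup\mathbb{T}$ is finite and left-scattered, else $\mathbb{T}$; $\mathbb{T}_\kappa=\mathbb{T}\setminus\{\inf\mathbb{T}\}$ if $\inf\mathbb{T}$ is finite and right-scattered, else $\mathbb{T}$; $\mathbb{T}_\kappa^\kappa=\mathbb{T}_\kappa\cap\mathbb{T}^\kappa$. Symmetric fractional derivative of order $\alpha$ at $t\in\mathbb{T}_\kappa^\kappa$: the real number $f^{\diamondsuit^\alpha}(t)$ (if it exists) such that for every $\varepsilon>0$ there is a neighborhood $U\subset\mathbb{T}$ of $t$ with $\big|[f^\sigma(t)-f(s)+f(2t-s)-f^\rho(t)]-f^{\diamondsuit^\alpha}(t)[\sigma(t)+2t-2s-\rho(t)]^\alpha\big|\le\varepsilon|\sigma(t)+2t-2s-\rho(t)|^\alpha$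 for all $s\in U$ with $2t-s\in U$. *)

theory Defs
  imports "HOL-Analysis.Analysis"
begin

definition time_scale :: "real set \<Rightarrow> bool" where
  "time_scale T \<longleftrightarrow> T \<noteq> {} \<and> closed T"

definition fjump :: "real set \<Rightarrow> real \<Rightarrow> real" (\<open>\<sigma>\<close>) where
  "\<sigma> T t = (if {s\<in>T. s > t} = {} then Sup T else Inf {s\<in>T. s > t})"

definition bjump :: "real set \<Rightarrow> real \<Rightarrow> real" (\<open>\<rho>\<close>) where
  "\<rho> T t = (if {s\<in>T. s < t} = {} then Inf T else Sup {s\<in>T. s < t})"

definition dense_point :: "real set \<Rightarrow> real \<Rightarrow> bool" where
  "dense_point T t \<longleftrightarrow> \<sigma> T t = t \<and> \<rho> T t = t"

definition T_upper_kappa :: "real set \<Rightarrow> real set" where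
  "T_upper_kappa T = (if bdd_above T \<and> \<rho> T (Sup T) < Sup T then T - {Sup T} else T)"

definition T_lower_kappa :: "real set \<Rightarrow> real set" where
  "T_lower_kappa T = (if bdd_below T \<and> \<sigma> T (Inf T) > Inf T then T - {Inf T} else T)"

definition T_kappa_kappa :: "real set \<Rightarrow> real set" where
  "T_kappa_kappa T = T_lower_kappa T \<inter> T_upper_kappa T"

definition has_sym_frac_deriv ::
  "real set \<Rightarrow> real \<Rightarrow> (real \<Rightarrow> real) \<Rightarrow> real \<Rightarrow> real \<Rightarrow> bool" where
  "has_sym_frac_deriv T \<alpha> f t D \<longleftrightarrow> t \<in> T_kappa_kappa T \<and>
     (\<forall>\<epsilon>>0. \<exists>V. open V \<and> t \<in> V \<and>
        (\<forall>s. s \<in> T \<inter> V \<and> 2 * t - s \<in> T \<inter> V \<longrightarrow>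
           \<bar>(f (\<sigma> T t) - f s + f (2 * t - s) - f (\<rho> T t))
              - D * (\<sigma> T t + 2 * t - 2 * s - \<rho> T t) powr \<alpha>\<bar>
           \<le> \<epsilon> * \<bar>\<sigma> T t + 2 * t - 2 * s - \<rho> T t\<bar> powr \<alpha>))"

end

theory Submission
  imports Defs
begin

lemma T_kk_sub: "T_kappa_kappa T \<subseteq> T"
  unfolding T_kappa_kappa_def T_lower_kappa_def T_upper_kappa_def by auto

lemma sig_le: assumes "s \<in> T" "s > t" shows "\<sigma> T t \<le> s"
proof -
  have ne: "{s\<in>T. s > t} \<noteq> {}" using assms by auto
  have "Inf {s\<in>T. s > t} \<le> s"
    by (rule cInf_lower) (use assms in \<open>auto intro: bdd_belowI[where m=t]\<close>)
  thus ?thesis using ne unfolding fjump_def by (auto simp del: Collect_empty_eq)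
qed

lemma sig_ge: assumes "t \<in> T" shows "t \<le> \<sigma> T t"
proof (cases "{s\<in>T. s > t} = {}")
  case True
  then have "bdd_above T" by (auto intro!: bdd_aboveI[where M=t] simp: not_less)
  then have "t \<le> Sup T" using assms by (rule cSup_upper[rotated])
  then show ?thesis using True unfolding fjump_def by simp
next
  case False
  then have "t \<le> Inf {s\<in>T. s > t}" by (intro cInf_greatest) auto
  then show ?thesis using False unfolding fjump_def by (auto simp del: Collect_empty_eq)
qed

lemma rho_ge: assumes "s \<in> T" "s < t" shows "s \<le> \<rho> T t"
proof -
  have ne: "{s\<in>T. s < t} \<noteq> {}" using assms by auto
  have "s \<le> Sup {s\<in>T. s < t}"
    by (rule cSup_upper) (use assms in \<open>auto intro: bdd_aboveI[where M=t]\<close>)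
  thus ?thesis using ne unfolding bjump_def by (auto simp del: Collect_empty_eq)
qed

lemma rho_le: assumes "t \<in> T" shows "\<rho> T t \<le> t"
proof (cases "{s\<in>T. s < t} = {}")
  case True
  then have "bdd_below T" by (auto intro!: bdd_belowI[where m=t] simp: not_less)
  then have "Inf T \<le> t" using assms by (rule cInf_lower[rotated])
  then show ?thesis using True unfolding bjump_def by simp
next
  case False
  then have "Sup {s\<in>T. s < t} \<le> t" by (intro cSup_least) auto
  then show ?thesis using False unfolding bjump_def by (auto simp del: Collect_empty_eq)
qed

theorem proposition3p25:
  fixes T :: "real set" and \<alpha> :: real
  assumes "time_scale T" and "0 \<in> T_kappa_kappa T"
    and "0 < \<alpha>" and "\<alpha> \<le> 1"
  shows "has_sym_frac_deriv T \<alpha> (\<lambda>t. \<bar>t\<bar>) 0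
           (if dense_point T 0 then 0
            else (\<sigma> T 0 + \<rho> T 0) / (\<sigma> T 0 - \<rho> T 0) powr \<alpha>)"
proof -
  have T0: "0 \<in> T" using assms(2) T_kk_sub by blast
  define a where "a = \<sigma> T 0"
  define b where "b = \<rho> T 0"
  have a0: "a \<ge> 0" using sig_ge[OF T0] a_def by simp
  have b0: "b \<le> 0" using rho_le[OF T0] b_def by simp
  have aS: "\<And>s. s \<in> T \<Longrightarrow> s > 0 \<Longrightarrow> a \<le> s" using sig_le a_def by blast
  have bS: "\<And>s. s \<in> T \<Longrightarrow> s < 0 \<Longrightarrow> s \<le> b" using rho_ge b_def by blast
  have num: "\<And>s. \<bar>a\<bar> - \<bar>s\<bar> + \<bar>2 * 0 - s\<bar> - \<bar>b\<bar> = a + b"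
    using a0 b0 by simp
  show ?thesis
  proof (cases "dense_point T 0")
    case True
    then have "a = 0" "b = 0" unfolding a_def b_def dense_point_def by auto
    then show ?thesis using assms(2) True
      unfolding has_sym_frac_deriv_def a_def[symmetric] b_def[symmetric]
      by (auto intro!: exI[where x=UNIV])
  next
    case False
    then have nd: "a > 0 \<or> b < 0" using a0 b0 unfolding a_def b_def dense_point_def by auto
    define r where "r = (if a > 0 then a else - b)"
    have r0: "r > 0" using nd r_def by auto
    have s0: "s = 0" if "s \<in> T" "-s \<in> T" "\<bar>s\<bar> < r" for s
    proof (rule ccontr)
      assume "s \<noteq> 0"
      then consider "s > 0" | "s < 0" by linarith
      then show False
      proof cases
        case 1
        show False
        proof (cases "a > 0")
          case True then show ?thesis using aS[OF that(1) 1] that(3) r_def 1 by auto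
        next
          case False then show ?thesis using bS[OF that(2)] that(3) r_def 1 by auto
        qed
      next
        case 2
        show False
        proof (cases "a > 0")
          case True then show ?thesis using aS[OF that(2)] that(3) r_def 2 by auto
        next
          case False then show ?thesis using bS[OF that(1) 2] that(3) r_def 2 by auto
        qed
      qed
    qed
    have ab: "a - b > 0" using nd a0 b0 by auto
    have key: "(a + b) / (a - b) powr \<alpha> * (a + 2 * 0 - 2 * 0 - b) powr \<alpha> = a + b"
      using ab by simp
    show ?thesis
      unfolding has_sym_frac_deriv_def a_def[symmetric] b_def[symmetric]
      using assms(2) False
    proof (simp only: if_False, intro conjI allI impI)
      fix \<epsilon> :: real assume "\<epsilon> > 0"
      show "\<exists>V. open V \<and> 0 \<in> V \<and> (\<forall>s. s \<in> T \<inter> V \<and> 2 * 0 - s \<in> T \<inter> V \<longrightarrow>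
           \<bar>(\<bar>a\<bar> - \<bar>s\<bar> + \<bar>2 * 0 - s\<bar> - \<bar>b\<bar>) - (a + b) / (a - b) powr \<alpha> * (a + 2 * 0 - 2 * s - b) powr \<alpha>\<bar>
           \<le> \<epsilon> * \<bar>a + 2 * 0 - 2 * s - b\<bar> powr \<alpha>)"
      proof (intro exI[where x="ball 0 r"] conjI allI impI)
        fix s assume h: "s \<in> T \<inter> ball 0 r \<and> 2 * 0 - s \<in> T \<inter> ball 0 r"
        then have "s = 0" using s0[of s] by auto
        then show "\<bar>(\<bar>a\<bar> - \<bar>s\<bar> + \<bar>2 * 0 - s\<bar> - \<bar>b\<bar>) - (a + b) / (a - b) powr \<alpha> * (a + 2 * 0 - 2 * s - b) powr \<alpha>\<bar>
           \<le> \<epsilon> * \<bar>a + 2 * 0 - 2 * s - b\<bar> powr \<alpha>"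
          using key num[of 0] \<open>\<epsilon> > 0\<close> by simp
      qed (use r0 in auto)
    qed simp
  qed
qed

end
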